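(* Every extended ADE curve $C$ is numerically $2$-connected: for every decomposition $C=A+B$ into nonzero effective divisors $A,B$ one has $A\cdot B\ge2$.
   Context: Work over $\mathbb C$. Let $X$ be a smooth projective surface and $C=\sum_{v\in V}m_vC_v\subset X$ an effective divisor with smooth irreducible components $C_v$, at most two through any point, meeting transversally (for $x\in C_v\cap C_w$, $(m_vC_v)\cap(m_wC_w)$ has local ring $\mathbb C[u,t]/(u^{m_v},t^{m_w})$). The labelled intersection graph $\Gamma$ has vertex set $V$, one edge per intersection point, label $m_v$. $C$ is an \emph{extended ADE curve} if (1) $\Gamma$ is one of: $\tilde A_n$: a cycle of $n+1$ vertices (two vertices, two edges if $n=1$), all labels $1$; $\tilde D_n$ ($n\ge4$): a chain of $n-3$ label-$2$ vertices with two label-$1$ vertices attached to each end (for $n=4$, one label-$2$ vertex with four label-$1$ neighbours); $\tilde E_6$: central label-$3$ vertex with three arms (label $2$ then $1$); $\tilde E_7$: chain $1,2,3,4,3,2,1$ plus a label-$2$ vertex on the label-$4$ vertex; $\tilde E_8$: chain $2,4,6,5,4,3,2,1$ plus a label-$3$ vertex on the label-$6$ vertex; (2) each $C_i$ with $m_i\ge2$ is a smooth rational $(-2)$-curve. *)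

theory Defs
  imports Main
begin

text \<open>A labelled multigraph on vertices 0..<length labels, given by a list of labels and a
  list of edges (one entry per intersection point).\<close>

definition edge_count :: "(nat \<times> nat) list \<Rightarrow> nat \<Rightarrow> nat \<Rightarrow> nat" where
  "edge_count es i j = length (filter (\<lambda>p. p = (i, j) \<or> p = (j, i)) es)"

definition tA :: "nat \<Rightarrow> nat list \<times> (nat \<times> nat) list" where
  "tA n = (replicate (n + 1) 1, map (\<lambda>i. (i, (i + 1) mod (n + 1))) [0..<n + 1])"

definition tD :: "nat \<Rightarrow> nat list \<times> (nat \<times> nat) list" where
  "tD n = (replicate (n - 3) 2 @ [1, 1, 1, 1],
           map (\<lambda>i. (i, i + 1)) [0..<n - 4] @
           [(0, n - 3), (0, n - 2), (n - 4, n - 1), (n - 4, n)])"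

definition tE6 :: "nat list \<times> (nat \<times> nat) list" where
  "tE6 = ([3, 2, 1, 2, 1, 2, 1], [(0,1), (1,2), (0,3), (3,4), (0,5), (5,6)])"

definition tE7 :: "nat list \<times> (nat \<times> nat) list" where
  "tE7 = ([1, 2, 3, 4, 3, 2, 1, 2], [(0,1), (1,2), (2,3), (3,4), (4,5), (5,6), (3,7)])"

definition tE8 :: "nat list \<times> (nat \<times> nat) list" where
  "tE8 = ([2, 4, 6, 5, 4, 3, 2, 1, 3],
          [(0,1), (1,2), (2,3), (3,4), (4,5), (5,6), (6,7), (2,8)])"

definition extended_ADE_graph :: "nat list \<times> (nat \<times> nat) list \<Rightarrow> bool" where
  "extended_ADE_graph G \<longleftrightarrow>
     (\<exists>n\<ge>1. G = tA n) \<or> (\<exists>n\<ge>4. G = tD n) \<or> G = tE6 \<or> G = tE7 \<or> G = tE8"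

text \<open>Intersection data of the curve C = sum m_v C_v: components indexed by V,
  multiplicities m, number of intersection points e v w of C_v and C_w (v \<noteq> w),
  and self-intersections s v = C_v^2.  The labelled intersection graph is isomorphic
  to one of the extended ADE graphs, and components of multiplicity \<ge> 2 are (-2)-curves.\<close>

definition extended_ADE_curve ::
  "'v set \<Rightarrow> ('v \<Rightarrow> nat) \<Rightarrow> ('v \<Rightarrow> 'v \<Rightarrow> nat) \<Rightarrow> ('v \<Rightarrow> int) \<Rightarrow> bool" where
  "extended_ADE_curve V m e s \<longleftrightarrow> finite V \<and>
     (\<exists>G f. extended_ADE_graph G \<and> bij_betw f V {0..<length (fst G)} \<and>
        (\<forall>v\<in>V. m v = fst G ! f v) \<and>
        (\<forall>v\<in>V. \<forall>w\<in>V. v \<noteq> w \<longrightarrow> e v w = edge_count (snd G) (f v) (f w))) \<and>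
     (\<forall>v\<in>V. m v \<ge> 2 \<longrightarrow> s v = -2)"

definition inter_num ::
  "'v set \<Rightarrow> ('v \<Rightarrow> 'v \<Rightarrow> nat) \<Rightarrow> ('v \<Rightarrow> int) \<Rightarrow> ('v \<Rightarrow> nat) \<Rightarrow> ('v \<Rightarrow> nat) \<Rightarrow> int" where
  "inter_num V e s A B =
     (\<Sum>v\<in>V. \<Sum>w\<in>V. int (A v) * int (B w) * (if v = w then s v else int (e v w)))"

end

theory Submission
  imports Defs Complex_Main
begin


lemma times_if0: "(h::'a::comm_ring_1) * (if P then c else 0) = (if P then h * c else 0)" by simp

lemma swap_es:
  fixes h M :: "nat \<Rightarrow> 'a::comm_ring_1"
  assumes "\<forall>(p,q)\<in>set es. p<N \<and> q<N"
  shows "sum_list (map (\<lambda>(p,q). h p * M q + h q * M p) es) =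
    (\<Sum>i<N. h i * sum_list (map (\<lambda>(p,q). (if p=i then M q else 0) + (if q=i then M p else 0)) es))"
  using assms
proof (induction es)
  case Nil then show ?case by simp
next
  case (Cons x es)
  obtain p q where x: "x = (p,q)" by fastforce
  have pq: "p<N" "q<N" using Cons.prems x by auto
  have "(\<Sum>i<N. h i * ((if p=i then M q else 0) + (if q=i then M p else 0))) = h p * M q + h q * M p"
    using pq by (simp add: distrib_left sum.distrib times_if0)
  then show ?case using Cons x by (simp add: distrib_left sum.distrib)
qed

lemma ec_es:
  fixes F :: "nat \<Rightarrow> nat \<Rightarrow> 'a::comm_ring_1"
  assumes "\<forall>(p,q)\<in>set es. p<N \<and> q<N \<and> p \<noteq> q"
  shows "(\<Sum>i<N. \<Sum>j<N. F i j * of_nat (edge_count es i j)) = sum_list (map (\<lambda>(p,q). F p q + F q p) es)"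
  using assms
proof (induction es)
  case Nil then show ?case by (simp add: edge_count_def)
next
  case (Cons x es)
  obtain p q where x: "x = (p,q)" by fastforce
  have pq: "p<N" "q<N" "p \<noteq> q" using Cons.prems x by auto
  have ec: "(of_nat (edge_count ((p,q)#es) i j)::'a) = (if i = p \<and> j = q then 1 else 0) + (if i = q \<and> j = p then 1 else 0) + of_nat (edge_count es i j)" for i j
    using pq x by (auto simp: edge_count_def)
  have "(\<Sum>i<N. \<Sum>j<N. F i j * ((if i = p \<and> j = q then 1 else 0) + (if i = q \<and> j = p then 1 else 0))) = F p q + F q p"
  proof -
    have "(\<Sum>i<N. \<Sum>j<N. F i j * ((if i = p \<and> j = q then 1 else 0) + (if i = q \<and> j = p then 1 else 0)))
      = (\<Sum>i<N. (if i = p then F i q else 0) + (if i = q then F i p else 0))"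
      using pq by (intro sum.cong refl) (auto simp: distrib_left sum.distrib times_if0 if_distrib[where f="\<lambda>x. F _ _ * x"])
    also have "\<dots> = F p q + F q p" using pq by (simp add: sum.distrib)
    finally show ?thesis .
  qed
  then show ?case using Cons x by (simp only: ec distrib_left sum.distrib) simp
qed
lemma null_cast:
  assumes "sum_list (map (\<lambda>(p,q). (if p=i then mm q else 0) + (if q=i then mm p else 0)) es) = 2 * (mm i::nat)"
  shows "sum_list (map (\<lambda>(p,q). (if p=i then (of_nat (mm q)::'a::comm_semiring_1) else 0) + (if q=i then of_nat (mm p) else 0)) es) = 2 * of_nat (mm i)"
proof -
  have "of_nat (sum_list (map (\<lambda>(p,q). (if p=i then mm q else 0) + (if q=i then mm p else 0)) es))
     = sum_list (map (\<lambda>(p,q). (if p=i then (of_nat (mm q)::'a) else 0) + (if q=i then of_nat (mm p) else 0)) es)"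
    by (induction es) auto
  then show ?thesis using assms by simp
qed

lemma core:
  fixes N :: nat and mm a b :: "nat \<Rightarrow> nat" and es :: "(nat \<times> nat) list"
  assumes E: "\<forall>(p,q)\<in>set es. p<N \<and> q<N \<and> p\<noteq>q"
  and null: "\<forall>i<N. sum_list (map (\<lambda>(p,q). (if p=i then mm q else 0) + (if q=i then mm p else 0)) es) = 2 * mm i"
  and conn: "\<forall>y::nat\<Rightarrow>real. (\<forall>(p,q)\<in>set es. y p = y q) \<longrightarrow> (\<forall>i<N. y i = y 0)"
  and one: "\<exists>k<N. mm k = 1"
  and pos: "\<forall>i<N. 0 < mm i"
  and ab: "\<forall>i<N. a i + b i = mm i" and nza: "\<exists>i<N. a i \<noteq> 0" and nzb: "\<exists>i<N. b i \<noteq> 0"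
  shows "2 \<le> -2 * (\<Sum>i<N. int (a i) * int (b i))
     + sum_list (map (\<lambda>(p,q). int (a p) * int (b q) + int (a q) * int (b p)) es)"
proof -
  define A where "A i = int (a i)" for i
  define M where "M i = int (mm i)" for i
  have bM: "int (b i) = M i - A i" if "i<N" for i using ab that unfolding A_def M_def by force
  have E2: "\<forall>(p,q)\<in>set es. p<N \<and> q<N" using E by auto
  have nullI: "sum_list (map (\<lambda>(p,q). (if p=i then M q else 0) + (if q=i then M p else 0)) es) = 2 * M i"
    if "i<N" for i unfolding M_def using null_cast[of i mm es] null that by blast
  have s1: "(\<Sum>i<N. int (a i) * int (b i)) = (\<Sum>i<N. A i * M i) - (\<Sum>i<N. A i ^ 2)"
    by (simp add: bM power2_eq_square algebra_simps sum_subtractf[symmetric] A_def)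
  have s2: "sum_list (map (\<lambda>(p,q). int (a p) * int (b q) + int (a q) * int (b p)) es)
     = sum_list (map (\<lambda>(p,q). A p * M q + A q * M p) es) - 2 * sum_list (map (\<lambda>(p,q). A p * A q) es)"
    using E2 by (induction es) (auto simp: bM algebra_simps A_def)
  have s3: "sum_list (map (\<lambda>(p,q). A p * M q + A q * M p) es) = 2 * (\<Sum>i<N. A i * M i)"
    unfolding swap_es[OF E2] by (simp add: nullI sum_distrib_left algebra_simps)
  define K where "K = (\<Sum>i<N. A i ^ 2) - sum_list (map (\<lambda>(p,q). A p * A q) es)"
  have IK: "-2 * (\<Sum>i<N. int (a i) * int (b i))
     + sum_list (map (\<lambda>(p,q). int (a p) * int (b q) + int (a q) * int (b p)) es) = 2 * K"
    unfolding s1 s2 s3 K_def by simp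
  define x where "x i = real (a i)" for i
  define Mr where "Mr i = real (mm i)" for i
  define y where "y i = x i / Mr i" for i
  define h where "h i = x i ^ 2 / Mr i" for i
  define S where "S = sum_list (map (\<lambda>(p,q). Mr p * Mr q * (y p - y q)^2) es)"
  have MrI: "Mr i \<noteq> 0" if "i<N" for i using pos that Mr_def by auto
  have nullR: "sum_list (map (\<lambda>(p,q). (if p=i then Mr q else 0) + (if q=i then Mr p else 0)) es) = 2 * Mr i"
    if "i<N" for i unfolding Mr_def using null_cast[of i mm es] null that by blast
  have t1: "S = sum_list (map (\<lambda>(p,q). h p * Mr q + h q * Mr p) es) - 2 * sum_list (map (\<lambda>(p,q). x p * x q) es)"
    unfolding S_def using E2
  proof (induction es)
    case Nil then show ?case by simp
  next
    case (Cons pq es)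
    obtain p q where pq: "pq = (p,q)" by fastforce
    have "p < N" "q < N" using Cons.prems pq by auto
    then have "Mr p * Mr q * (y p - y q)^2 = h p * Mr q + h q * Mr p - 2 * (x p * x q)"
      using MrI[of p] MrI[of q] unfolding y_def h_def
      by (simp add: field_simps power2_eq_square)
    then show ?case using Cons pq by (simp add: algebra_simps)
  qed
  have t2: "sum_list (map (\<lambda>(p,q). h p * Mr q + h q * Mr p) es) = 2 * (\<Sum>i<N. x i ^ 2)"
    unfolding swap_es[OF E2] using MrI
    by (simp add: nullR sum_distrib_left h_def field_simps)
  have KR: "real_of_int K = (\<Sum>i<N. x i ^ 2) - sum_list (map (\<lambda>(p,q). x p * x q) es)"
  proof -
    have "real_of_int (sum_list (map (\<lambda>(p,q). A p * A q) es)) = sum_list (map (\<lambda>(p,q). x p * x q) es)"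
      by (induction es) (auto simp: A_def x_def)
    then show ?thesis unfolding K_def by (simp add: A_def x_def)
  qed
  have SK: "S = 2 * real_of_int K" using t1 t2 KR by simp
  have "K > 0"
  proof (cases "\<exists>(p,q)\<in>set es. y p \<noteq> y q")
    case True
    then obtain p q where pq: "(p,q) \<in> set es" "y p \<noteq> y q" by auto
    have "p<N" "q<N" using pq E2 by auto
    then have pos1: "Mr p * Mr q * (y p - y q)^2 > 0" using MrI pq(2) pos Mr_def by auto
    have "Mr p * Mr q * (y p - y q)^2 \<le> S" unfolding S_def
      apply (rule member_le_sum_list)
      using pq(1) apply force
      using Mr_def by auto
    then show ?thesis using pos1 SK by simp
  next
    case False
    then have "\<forall>i<N. y i = y 0" using conn by auto
    obtain k where k: "k<N" "mm k = 1" using one by auto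
    have yk: "y k = x k" using k by (simp add: y_def Mr_def)
    have "a k \<le> 1" using ab k by force
    then consider "a k = 0" | "a k = 1" by linarith
    then show ?thesis
    proof cases
      case 1
      then have "\<forall>i<N. y i = 0" using \<open>\<forall>i<N. y i = y 0\<close> k yk x_def by (metis of_nat_0)
      then have "\<forall>i<N. a i = 0" using MrI unfolding y_def x_def by auto
      then show ?thesis using nza by auto
    next
      case 2
      then have "\<forall>i<N. y i = 1" using \<open>\<forall>i<N. y i = y 0\<close> k yk x_def by (metis of_nat_1)
      then have "\<forall>i<N. a i = mm i" using MrI unfolding y_def x_def Mr_def by auto
      then show ?thesis using nzb ab by force
    qed
  qed
  then show ?thesis using IK by simp
qed

definition good_graph :: "nat list \<times> (nat \<times> nat) list \<Rightarrow> bool" where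
  "good_graph G \<longleftrightarrow> (let N = length (fst G); es = snd G; mm = (\<lambda>i. fst G ! i) in
     (\<forall>(p,q)\<in>set es. p<N \<and> q<N \<and> p\<noteq>q) \<and>
     (\<forall>i<N. sum_list (map (\<lambda>(p,q). (if p=i then mm q else 0) + (if q=i then mm p else 0)) es) = 2 * mm i) \<and>
     (\<forall>y::nat\<Rightarrow>real. (\<forall>(p,q)\<in>set es. y p = y q) \<longrightarrow> (\<forall>i<N. y i = y 0)) \<and>
     (\<exists>k<N. mm k = 1) \<and> (\<forall>i<N. 0 < mm i))"

lemma ec_diag:
  assumes "\<forall>(p,q)\<in>set es. p \<noteq> q" shows "edge_count es i i = 0"
  using assms by (auto simp: edge_count_def filter_empty_conv)

lemma reduce:
  fixes V :: "'v set" and m :: "'v \<Rightarrow> nat" and e :: "'v \<Rightarrow> 'v \<Rightarrow> nat" and s :: "'v \<Rightarrow> int"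
  assumes gg: "good_graph G" and bij: "bij_betw f V {0..<length (fst G)}"
    and mv: "\<forall>v\<in>V. m v = fst G ! f v"
    and ev: "\<forall>v\<in>V. \<forall>w\<in>V. v \<noteq> w \<longrightarrow> e v w = edge_count (snd G) (f v) (f w)"
    and sv: "\<forall>v\<in>V. m v \<ge> 2 \<longrightarrow> s v = -2"
    and AB: "\<forall>v\<in>V. A v + B v = m v" "\<exists>v\<in>V. A v \<noteq> 0" "\<exists>v\<in>V. B v \<noteq> 0"
  shows "inter_num V e s A B \<ge> 2"
proof -
  define N where "N = length (fst G)"
  define es where "es = snd G"
  define mm where "mm i = fst G ! i" for i
  define g where "g = inv_into V f"
  have gb: "bij_betw g {0..<N} V" unfolding g_def N_def by (rule bij_betw_inv_into[OF bij])
  have fg: "f (g i) = i" if "i < N" for i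
    unfolding g_def using that bij N_def by (simp add: bij_betw_def f_inv_into_f)
  have gV: "g i \<in> V" if "i<N" for i using gb that by (auto simp: bij_betw_def)
  define a where "a i = A (g i)" for i
  define b where "b i = B (g i)" for i
  have E: "\<forall>(p,q)\<in>set es. p<N \<and> q<N \<and> p\<noteq>q" and
    null: "\<forall>i<N. sum_list (map (\<lambda>(p,q). (if p=i then mm q else 0) + (if q=i then mm p else 0)) es) = 2 * mm i"
    and conn: "\<forall>y::nat\<Rightarrow>real. (\<forall>(p,q)\<in>set es. y p = y q) \<longrightarrow> (\<forall>i<N. y i = y 0)"
    and one: "\<exists>k<N. mm k = 1" and pos: "\<forall>i<N. 0 < mm i"
    using gg unfolding good_graph_def Let_def N_def es_def mm_def by blast+
  have ab: "\<forall>i<N. a i + b i = mm i" using AB(1) mv gV fg unfolding a_def b_def mm_def by metis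
  have fV: "f v < N" if "v \<in> V" for v using bij that N_def by (auto simp: bij_betw_def)
  have gf: "g (f v) = v" if "v \<in> V" for v using bij that unfolding g_def by (simp add: bij_betw_def)
  have nza: "\<exists>i<N. a i \<noteq> 0" using AB(2) fV gf unfolding a_def by metis
  have nzb: "\<exists>i<N. b i \<noteq> 0" using AB(3) fV gf unfolding b_def by metis
  have c: "2 \<le> -2 * (\<Sum>i<N. int (a i) * int (b i))
     + sum_list (map (\<lambda>(p,q). int (a p) * int (b q) + int (a q) * int (b p)) es)"
    by (rule core[OF E null conn one pos ab nza nzb])
  have "inter_num V e s A B = (\<Sum>i\<in>{0..<N}. \<Sum>j\<in>{0..<N}.
      int (A (g i)) * int (B (g j)) * (if g i = g j then s (g i) else int (e (g i) (g j))))"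
    unfolding inter_num_def
    by (simp only: sum.reindex_bij_betw[OF gb, symmetric])
  also have "\<dots> = (\<Sum>i<N. \<Sum>j<N. int (a i) * int (b j) * ((if i = j then -2 else 0) + int (edge_count es i j)))"
    unfolding lessThan_atLeast0[symmetric]
  proof (intro sum.cong refl)
    fix i j assume i: "i \<in> {..<N}" and j: "j \<in> {..<N}"
    show "int (A (g i)) * int (B (g j)) * (if g i = g j then s (g i) else int (e (g i) (g j))) =
         int (a i) * int (b j) * ((if i = j then -2 else 0) + int (edge_count es i j))"
    proof (cases "i = j")
      case True
      have ec0: "edge_count es i i = 0" using E ec_diag by fastforce
      show ?thesis
      proof (cases "a i = 0 \<or> b i = 0")
        case True then show ?thesis using \<open>i = j\<close> ec0 a_def b_def by auto
      next
        case False
        then have "m (g i) \<ge> 2" using ab i mv gV fg mm_def AB(1) a_def b_def by (metis add_mono_thms_linordered_semiring(1) lessThan_iff one_add_one less_one not_le)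
        then show ?thesis using sv gV i True ec0 a_def b_def by auto
      qed
    next
      case False
      then have "g i \<noteq> g j" using fg i j by (metis lessThan_iff)
      then show ?thesis using False ev gV fg i j a_def b_def es_def by auto
    qed
  qed
  also have "\<dots> = -2 * (\<Sum>i<N. int (a i) * int (b i)) + (\<Sum>i<N. \<Sum>j<N. (int (a i) * int (b j)) * of_nat (edge_count es i j))"
  proof -
    have "(\<Sum>i<N. \<Sum>j<N. int (a i) * int (b j) * (if i = j then -2 else 0)) = (\<Sum>i<N. -2 * (int (a i) * int (b i)))"
    proof (intro sum.cong refl)
      fix i assume "i \<in> {..<N}"
      have "(\<Sum>j<N. int (a i) * int (b j) * (if i = j then -2 else 0)) = (\<Sum>j<N. if i = j then int (a i) * int (b j) * -2 else 0)"
        by (intro sum.cong refl) auto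
      also have "\<dots> = -2 * (int (a i) * int (b i))" using \<open>i \<in> {..<N}\<close> by (simp add: sum.delta)
      finally show "(\<Sum>j<N. int (a i) * int (b j) * (if i = j then -2 else 0)) = -2 * (int (a i) * int (b i))" .
    qed
    then show ?thesis by (simp add: distrib_left sum.distrib sum_distrib_left)
  qed
  also have "\<dots> = -2 * (\<Sum>i<N. int (a i) * int (b i))
     + sum_list (map (\<lambda>(p,q). int (a p) * int (b q) + int (a q) * int (b p)) es)"
    using ec_es[OF E, of "\<lambda>i j. int (a i) * int (b j)"] by simp
  finally show ?thesis using c by simp
qed


lemma good_E6: "good_graph tE6" unfolding good_graph_def tE6_def Let_def
  apply (simp add: less_Suc_eq numeral_eq_Suc) apply (rule exI[where x=2]) by simp
lemma good_E7: "good_graph tE7" unfolding good_graph_def tE7_def Let_def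
  apply (simp add: less_Suc_eq numeral_eq_Suc) apply (rule exI[where x=0]) by simp
lemma good_E8: "good_graph tE8" unfolding good_graph_def tE8_def Let_def
  apply (simp add: less_Suc_eq numeral_eq_Suc) apply (rule exI[where x=7]) by simp

lemma good_A: assumes n: "n \<ge> 1" shows "good_graph (tA n)"
proof -
  define es where "es = map (\<lambda>i. (i, (i + 1) mod (n + 1))) [0..<n + 1]"
  have mod1: "(k+1) mod (n+1) = (if k < n then k+1 else 0)" if "k < n+1" for k
  proof (cases "k < n")
    case False then have "k = n" using that by simp
    then show ?thesis by simp
  qed simp
  have E: "\<forall>(p,q)\<in>set es. p<n+1 \<and> q<n+1 \<and> p\<noteq>q"
    unfolding es_def using n mod1 by auto
  have null: "sum_list (map (\<lambda>(p,q). (if p=i then replicate (n+1) 1 ! q else 0) + (if q=i then replicate (n+1) 1 ! p else 0)) es) = 2 * (replicate (n+1) (1::nat) ! i)"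
    if i: "i < n+1" for i
  proof -
    have "sum_list (map (\<lambda>(p,q). (if p=i then replicate (n+1) 1 ! q else 0) + (if q=i then replicate (n+1) (1::nat) ! p else 0)) es)
      = (\<Sum>k\<in>{0..<n+1}. (if k = i then 1 else 0) + (if k = (if i = 0 then n else i - 1) then 1 else 0))"
      unfolding es_def map_map
      apply (subst sum_set_upt_conv_sum_list_nat[symmetric])
      apply (intro sum.cong refl)
      using i mod1 by auto
    also have "\<dots> = 2" using i by (auto simp: sum.distrib)
    finally show ?thesis using i by (simp add: nth_Cons')
  qed
  have conn: "y i = y 0" if h: "\<forall>(p,q)\<in>set es. y p = y q" and "i < n+1" for y :: "nat \<Rightarrow> real" and i
    using \<open>i < n+1\<close>
  proof (induction i)
    case 0 then show ?case by simp
  next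
    case (Suc i)
    have "(i, (i+1) mod (n+1)) \<in> set es" unfolding es_def using Suc.prems by auto
    then have "y i = y (i+1)" using h mod1 Suc.prems by fastforce
    then show ?case using Suc by simp
  qed
  show ?thesis unfolding good_graph_def Let_def tA_def fst_conv snd_conv length_replicate
    using E null conn unfolding es_def[symmetric] by (auto simp: nth_Cons')
qed

lemma good_D: assumes n: "n \<ge> 4" shows "good_graph (tD n)"
proof -
  obtain r where r: "n = r + 4" using n by (metis add.commute le_Suc_ex)
  define lab :: "nat list" where "lab = replicate (r+1) 2 @ [1,1,1,1]"
  define es where "es = map (\<lambda>i. (i, i + 1)) [0..<r] @ [(0, r+1), (0, r+2), (r, r+3), (r, r+4)]"
  have tD: "tD n = (lab, es)" unfolding tD_def lab_def es_def r
    by (simp add: numeral_eq_Suc)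
  have len: "length lab = r + 5" unfolding lab_def by simp
  have mm: "lab ! i = (if i \<le> r then 2 else 1)" if "i < r + 5" for i
  proof (cases "i \<le> r")
    case True then show ?thesis unfolding lab_def by (simp add: nth_append del: replicate.simps)
  next
    case False
    define d where "d = i - (r+1)"
    have d: "i = r + 1 + d" "d < 4" using that False unfolding d_def by auto
    then show ?thesis unfolding lab_def using False by (auto simp: nth_append less_Suc_eq numeral_eq_Suc)
  qed
  have E: "\<forall>(p,q)\<in>set es. p<r+5 \<and> q<r+5 \<and> p\<noteq>q" unfolding es_def by auto
  have null: "sum_list (map (\<lambda>(p,q). (if p=i then lab ! q else 0) + (if q=i then lab ! p else 0)) es) = 2 * lab ! i"
    if i: "i < r+5" for i
  proof -
    have c1: "sum_list (map (\<lambda>(p,q). (if p=i then lab ! q else 0) + (if q=i then lab ! p else 0)) (map (\<lambda>i. (i, i + 1)) [0..<r]))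
      = (\<Sum>k\<in>{0..<r}. (if k = i then 2 else 0) + (if i \<ge> 1 \<and> k = i - 1 then 2 else 0))"
      unfolding map_map
      apply (subst sum_set_upt_conv_sum_list_nat[symmetric])
      apply (intro sum.cong refl)
      using i mm by auto
    also have "\<dots> = (if i < r then 2 else 0) + (if 1 \<le> i \<and> i \<le> r then 2 else 0)"
      by (auto simp: sum.distrib)
    finally show ?thesis unfolding es_def using i mm by auto
  qed
  have conn: "y i = y 0" if h: "\<forall>(p,q)\<in>set es. y p = y q" and "i < r+5" for y :: "nat \<Rightarrow> real" and i
  proof -
    have ch: "y i = y 0" if "i \<le> r" for i
      using that
    proof (induction i)
      case 0 then show ?case by simp
    next
      case (Suc i)
      have "(i, i+1) \<in> set es" unfolding es_def using Suc.prems by auto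
      then have "y i = y (i+1)" using h by fastforce
      then show ?case using Suc by simp
    qed
    have "y (r+1) = y 0" "y (r+2) = y 0" "y (r+3) = y r" "y (r+4) = y r"
      using h unfolding es_def by auto
    then show ?thesis using ch[of i] ch[of r] \<open>i < r+5\<close>
      by (cases "i \<le> r") (auto simp: less_Suc_eq numeral_eq_Suc)
  qed
  have one: "\<exists>k<r+5. lab ! k = 1" using mm[of "r+1"] by (intro exI[where x="r+1"]) simp
  show ?thesis unfolding good_graph_def Let_def tD fst_conv snd_conv len
    using E null conn one mm by auto
qed

lemma good_ext: "extended_ADE_graph G \<Longrightarrow> good_graph G"
  unfolding extended_ADE_graph_def using good_A good_D good_E6 good_E7 good_E8 by auto

theorem lemma3p6:
  fixes V :: "'v set" and m :: "'v \<Rightarrow> nat" and e :: "'v \<Rightarrow> 'v \<Rightarrow> nat" and s :: "'v \<Rightarrow> int"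
  assumes "extended_ADE_curve V m e s"
  shows "\<forall>A B :: 'v \<Rightarrow> nat.
           (\<forall>v\<in>V. A v + B v = m v) \<and> (\<exists>v\<in>V. A v \<noteq> 0) \<and> (\<exists>v\<in>V. B v \<noteq> 0)
           \<longrightarrow> inter_num V e s A B \<ge> 2"
proof (intro allI impI)
  fix A B :: "'v \<Rightarrow> nat"
  assume AB: "(\<forall>v\<in>V. A v + B v = m v) \<and> (\<exists>v\<in>V. A v \<noteq> 0) \<and> (\<exists>v\<in>V. B v \<noteq> 0)"
  from assms obtain G f where G: "extended_ADE_graph G" "bij_betw f V {0..<length (fst G)}"
    "\<forall>v\<in>V. m v = fst G ! f v"
    "\<forall>v\<in>V. \<forall>w\<in>V. v \<noteq> w \<longrightarrow> e v w = edge_count (snd G) (f v) (f w)"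
    and sv: "\<forall>v\<in>V. m v \<ge> 2 \<longrightarrow> s v = -2"
    unfolding extended_ADE_curve_def by blast
  show "inter_num V e s A B \<ge> 2"
    by (rule reduce[OF good_ext[OF G(1)] G(2) G(3) G(4) sv]) (use AB in auto)
qed

end
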